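(* Let $p\in[1,\infty)$, $w$ a weight sequence, and $A\subset L_{p,w}$ such that $\forall\varepsilon>0\ \exists N\in\mathbb{N}\ \forall a\in A\ \forall i\ge N:\ T_i(a)<\varepsilon$. Then the same holds for $A-A=\{a-b:a,b\in A\}$, i.e. $\forall\varepsilon>0\ \exists N\in\mathbb{N}\ \forall a,b\in A\ \forall i\ge N:\ T_i(a-b)<\varepsilon$.
   Context: A weight sequence is a sequence $w=(w_i)$ of positive reals with $w_1=1\ge w_2\ge\dots$, $w_i\to0$, and $\sum_i w_i=+\infty$. For a real sequence $a$, $\|a\|_{p,w}=\sup_{\sigma}\big(\sum_{i=1}^\infty |a_{\sigma_i}|^p w_i\big)^{1/p}$ over all permutations $\sigma$ of $\mathbb{N}$; $L_{p,w}$ is the set of real sequences with finite norm. $T_i(a)=\|(a_{i+1},a_{i+2},\dots)\|_{p,w}^p$ (the $p$-th power of the norm of the $i$-th tail). *)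

theory Defs
  imports "HOL-Analysis.Analysis"
begin

(* Sequences are 0-indexed: a 0 is a_1, w 0 is w_1. *)

definition weight_seq :: "(nat \<Rightarrow> real) \<Rightarrow> bool" where
  "weight_seq w \<longleftrightarrow> (\<forall>i. w i > 0) \<and> w 0 = 1 \<and> decseq w \<and> w \<longlonglongrightarrow> 0
     \<and> \<not> summable w"

definition lorentz_pow :: "real \<Rightarrow> (nat \<Rightarrow> real) \<Rightarrow> (nat \<Rightarrow> real) \<Rightarrow> ennreal" where
  "lorentz_pow p w a = (SUP \<sigma>\<in>{\<sigma>. bij \<sigma>}. (\<Sum>i. ennreal (\<bar>a (\<sigma> i)\<bar> powr p * w i)))"

definition L_pw :: "real \<Rightarrow> (nat \<Rightarrow> real) \<Rightarrow> (nat \<Rightarrow> real) set" where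
  "L_pw p w = {a. lorentz_pow p w a < top}"

(* the norm ||a||_{p,w} (meaningful for a in L_pw) *)
definition lorentz_norm :: "real \<Rightarrow> (nat \<Rightarrow> real) \<Rightarrow> (nat \<Rightarrow> real) \<Rightarrow> real" where
  "lorentz_norm p w a = enn2real (lorentz_pow p w a) powr (1 / p)"

(* T_i(a) = || (a_{i+1}, a_{i+2}, ...) ||^p ; in 0-indexing the i-th tail is k \<mapsto> a (k + i) *)
definition tail_T :: "real \<Rightarrow> (nat \<Rightarrow> real) \<Rightarrow> nat \<Rightarrow> (nat \<Rightarrow> real) \<Rightarrow> real" where
  "tail_T p w i a = lorentz_norm p w (\<lambda>k. a (k + i)) powr p"

end

theory Submission
  imports Defs
begin

lemma extend_perm:
  fixes g :: "nat \<Rightarrow> nat"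
  assumes "inj_on g {..<n}"
  shows "\<exists>\<pi>. bij \<pi> \<and> (\<forall>k<n. \<pi> k = g k)"
proof -
  define S where "S = {..<n}"
  define T where "T = g ` S"
  define M where "M = S \<union> T"
  have fin: "finite S" "finite T" "finite M" by (auto simp: S_def T_def M_def)
  have cST: "card S = card T" using assms by (simp add: S_def T_def card_image)
  have "card (M - S) = card (M - T)"
    using fin cST by (simp add: card_Diff_subset M_def)
  then obtain h where h: "bij_betw h (M - S) (M - T)"
    using fin finite_same_card_bij by (meson finite_Diff)
  define \<pi> where "\<pi> x = (if x \<in> S then g x else if x \<in> M then h x else x)" for x
  have b1: "bij_betw \<pi> S T"
    using assms unfolding S_def T_def
    by (smt (verit) \<pi>_def S_def bij_betw_cong inj_on_imp_bij_betw)
  have b2: "bij_betw \<pi> (M - S) (M - T)"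
    using h by (smt (verit) DiffD1 DiffD2 \<pi>_def bij_betw_cong)
  have b3: "bij_betw \<pi> (- M) (- M)"
  proof -
    have "bij_betw id (- M) (- M)" by simp
    moreover have "\<And>x. x \<in> - M \<Longrightarrow> \<pi> x = id x" by (auto simp: \<pi>_def M_def)
    ultimately show ?thesis by (metis bij_betw_cong)
  qed
  have "bij_betw \<pi> (S \<union> (M - S)) (T \<union> (M - T))"
    by (rule bij_betw_combine[OF b1 b2]) auto
  then have "bij_betw \<pi> M M" by (simp add: M_def Un_absorb1 Un_commute sup_left_commute)
  then have "bij_betw \<pi> (M \<union> - M) (M \<union> - M)"
    by (intro bij_betw_combine[OF _ b3]) auto
  then have "bij \<pi>" by simp
  moreover have "\<forall>k<n. \<pi> k = g k" by (simp add: \<pi>_def S_def)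
  ultimately show ?thesis by blast
qed

lemma tail_le:
  assumes "weight_seq w"
  shows "lorentz_pow p w (\<lambda>k. a (k + i)) \<le> lorentz_pow p w a"
proof -
  define R where "R = lorentz_pow p w a"
  have R: "(\<Sum>k. ennreal (\<bar>a (\<pi> k)\<bar> powr p * w k)) \<le> R" if "bij \<pi>" for \<pi>
    unfolding R_def lorentz_pow_def
    by (rule SUP_upper[where f="\<lambda>\<sigma>. \<Sum>i. ennreal (\<bar>a (\<sigma> i)\<bar> powr p * w i)"]) (simp add: that)
  have "(\<Sum>k. ennreal (\<bar>a (\<sigma> k + i)\<bar> powr p * w k)) \<le> R" if bs: "bij \<sigma>" for \<sigma>
  proof -
    have "(\<Sum>k<n. ennreal (\<bar>a (\<sigma> k + i)\<bar> powr p * w k)) \<le> R" for n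
    proof -
      have "inj_on (\<lambda>k. \<sigma> k + i) {..<n}"
        using bs unfolding bij_def inj_on_def by (auto dest: injD)
      then obtain \<pi> where pi: "bij \<pi>" "\<forall>k<n. \<pi> k = \<sigma> k + i"
        using extend_perm by blast
      have "(\<Sum>k<n. ennreal (\<bar>a (\<sigma> k + i)\<bar> powr p * w k))
          = (\<Sum>k<n. ennreal (\<bar>a (\<pi> k)\<bar> powr p * w k))"
        using pi by (intro sum.cong) auto
      also have "\<dots> \<le> (\<Sum>k. ennreal (\<bar>a (\<pi> k)\<bar> powr p * w k))"
        by (rule sum_le_suminf) auto
      also have "\<dots> \<le> R" by (rule R[OF pi(1)])
      finally show ?thesis .
    qed
    then show ?thesis unfolding suminf_eq_SUP by (rule SUP_least)
  qed
  then show ?thesis unfolding lorentz_pow_def[of p w "\<lambda>k. a (k + i)"] R_def by (auto intro!: SUP_least)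
qed

lemma pw_ineq:
  fixes x y p :: real
  assumes "p \<ge> 1"
  shows "\<bar>x - y\<bar> powr p \<le> 2 powr p * (\<bar>x\<bar> powr p + \<bar>y\<bar> powr p)"
proof -
  have "\<bar>x - y\<bar> \<le> 2 * max \<bar>x\<bar> \<bar>y\<bar>" by auto
  then have "\<bar>x - y\<bar> powr p \<le> (2 * max \<bar>x\<bar> \<bar>y\<bar>) powr p"
    using assms by (intro powr_mono2) auto
  also have "\<dots> = 2 powr p * max \<bar>x\<bar> \<bar>y\<bar> powr p" by (simp add: powr_mult)
  also have "\<dots> \<le> 2 powr p * (\<bar>x\<bar> powr p + \<bar>y\<bar> powr p)"
    by (intro mult_left_mono) (auto simp: max_def)
  finally show ?thesis .
qed

lemma diff_le:
  assumes "weight_seq w" "p \<ge> 1"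
  shows "lorentz_pow p w (\<lambda>k. a k - b k) \<le> ennreal (2 powr p) * (lorentz_pow p w a + lorentz_pow p w b)"
  unfolding lorentz_pow_def
proof (rule SUP_least)
  fix \<sigma> :: "nat \<Rightarrow> nat" assume "\<sigma> \<in> {\<sigma>. bij \<sigma>}"
  then have bs: "\<sigma> \<in> {\<sigma>. bij \<sigma>}" by simp
  have w0: "w k \<ge> 0" for k using assms(1) unfolding weight_seq_def by (meson less_imp_le)
  let ?A = "\<lambda>k. ennreal (\<bar>a (\<sigma> k)\<bar> powr p * w k)"
  let ?B = "\<lambda>k. ennreal (\<bar>b (\<sigma> k)\<bar> powr p * w k)"
  have "(\<Sum>k. ennreal (\<bar>a (\<sigma> k) - b (\<sigma> k)\<bar> powr p * w k))
      \<le> (\<Sum>k. ennreal (2 powr p) * (?A k + ?B k))"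
  proof (rule suminf_le)
    fix k
    have "\<bar>a (\<sigma> k) - b (\<sigma> k)\<bar> powr p * w k \<le> (2 powr p * (\<bar>a (\<sigma> k)\<bar> powr p + \<bar>b (\<sigma> k)\<bar> powr p)) * w k"
      using pw_ineq[OF assms(2)] w0 by (intro mult_right_mono) auto
    also have "\<dots> = 2 powr p * (\<bar>a (\<sigma> k)\<bar> powr p * w k + \<bar>b (\<sigma> k)\<bar> powr p * w k)"
      by (simp add: algebra_simps)
    finally show "ennreal (\<bar>a (\<sigma> k) - b (\<sigma> k)\<bar> powr p * w k) \<le> ennreal (2 powr p) * (?A k + ?B k)"
      using w0 by (simp add: ennreal_mult[symmetric] ennreal_plus[symmetric] del: ennreal_plus)
  qed auto
  also have "\<dots> = ennreal (2 powr p) * ((\<Sum>k. ?A k) + (\<Sum>k. ?B k))"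
    by (simp add: suminf_add)
  also have "\<dots> \<le> ennreal (2 powr p) * ((SUP \<sigma>\<in>{\<sigma>. bij \<sigma>}. \<Sum>i. ennreal (\<bar>a (\<sigma> i)\<bar> powr p * w i))
       + (SUP \<sigma>\<in>{\<sigma>. bij \<sigma>}. \<Sum>i. ennreal (\<bar>b (\<sigma> i)\<bar> powr p * w i)))"
    by (intro mult_left_mono add_mono SUP_upper bs) auto
  finally show "(\<Sum>k. ennreal (\<bar>a (\<sigma> k) - b (\<sigma> k)\<bar> powr p * w k)) \<le> ennreal (2 powr p) * ((SUP \<sigma>\<in>{\<sigma>. bij \<sigma>}. \<Sum>i. ennreal (\<bar>a (\<sigma> i)\<bar> powr p * w i))
       + (SUP \<sigma>\<in>{\<sigma>. bij \<sigma>}. \<Sum>i. ennreal (\<bar>b (\<sigma> i)\<bar> powr p * w i)))" .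
qed

lemma tail_T_eq:
  assumes "p \<ge> 1"
  shows "tail_T p w i a = enn2real (lorentz_pow p w (\<lambda>k. a (k + i)))"
  using assms unfolding tail_T_def lorentz_norm_def
  by (simp add: powr_powr)

theorem mainTheorem11:
  fixes p :: real and w :: "nat \<Rightarrow> real" and A :: "(nat \<Rightarrow> real) set"
  assumes "1 \<le> p" and "weight_seq w" and "A \<subseteq> L_pw p w"
    and "\<forall>\<epsilon>>0. \<exists>N. \<forall>a\<in>A. \<forall>i\<ge>N. tail_T p w i a < \<epsilon>"
  shows "\<forall>\<epsilon>>0. \<exists>N. \<forall>a\<in>A. \<forall>b\<in>A. \<forall>i\<ge>N. tail_T p w i (\<lambda>k. a k - b k) < \<epsilon>"
proof (intro allI impI)
  fix \<epsilon> :: real assume e: "\<epsilon> > 0"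
  define C where "C = 2 powr p"
  have C: "C > 0" by (simp add: C_def)
  obtain N where N: "\<forall>a\<in>A. \<forall>i\<ge>N. tail_T p w i a < \<epsilon> / (2 * C)"
    using assms(4) e C by (meson divide_pos_pos mult_pos_pos zero_less_numeral)
  show "\<exists>N. \<forall>a\<in>A. \<forall>b\<in>A. \<forall>i\<ge>N. tail_T p w i (\<lambda>k. a k - b k) < \<epsilon>"
  proof (intro exI ballI allI impI)
    fix a b i assume ab: "a \<in> A" "b \<in> A" and i: "N \<le> i"
    define X where "X = lorentz_pow p w (\<lambda>k. a (k + i) - b (k + i))"
    define Ya where "Ya = lorentz_pow p w (\<lambda>k. a (k + i))"
    define Yb where "Yb = lorentz_pow p w (\<lambda>k. b (k + i))"
    have Ya: "Ya < top" using tail_le[OF assms(2), of p a i] ab assms(3)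
      unfolding Ya_def L_pw_def by auto
    have Yb: "Yb < top" using tail_le[OF assms(2), of p b i] ab assms(3)
      unfolding Yb_def L_pw_def by auto
    have ta: "enn2real Ya < \<epsilon> / (2 * C)" using N ab i tail_T_eq[OF assms(1)] Ya_def by metis
    have tb: "enn2real Yb < \<epsilon> / (2 * C)" using N ab i tail_T_eq[OF assms(1)] Yb_def by metis
    have t: "tail_T p w i (\<lambda>k. a k - b k) = enn2real X"
      using tail_T_eq[OF assms(1)] X_def by simp
    have XY: "X \<le> ennreal C * (Ya + Yb)"
      unfolding X_def Ya_def Yb_def C_def
      using diff_le[OF assms(2,1), of "\<lambda>k. a (k + i)" "\<lambda>k. b (k + i)"] by simp
    show "tail_T p w i (\<lambda>k. a k - b k) < \<epsilon>"
    proof (cases "X = top")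
      case True then show ?thesis using t e by simp
    next
      case False
      have "enn2real X \<le> enn2real (ennreal C * (Ya + Yb))"
        using XY Ya Yb by (intro enn2real_mono) (auto simp: ennreal_mult_less_top)
      also have "\<dots> = C * (enn2real Ya + enn2real Yb)"
        using Ya Yb C by (simp add: enn2real_mult enn2real_plus)
      also have "\<dots> < C * (\<epsilon> / (2 * C) + \<epsilon> / (2 * C))"
        using ta tb C by (intro mult_strict_left_mono) auto
      also have "\<dots> = \<epsilon>" using C by (simp add: field_simps)
      finally show ?thesis using t by simp
    qed
  qed
qed

end
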